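(* Let $\mathcal{A}=\mathcal{R}*_K\mathcal{S}*_L\mathcal{T}\in\mathbb{C}^{I_1\times\cdots\times I_N\times J_1\times\cdots\times J_M}$, where $\mathcal{R}\in\mathbb{C}^{I_1\times\cdots\times I_N\times H_1\times\cdots\times H_K}$, $\mathcal{S}\in\mathbb{C}^{H_1\times\cdots\times H_K\times G_1\times\cdots\times G_L}$ and $\mathcal{T}\in\mathbb{C}^{G_1\times\cdots\times G_L\times J_1\times\cdots\times J_M}$, and let $\mathcal{B}=\mathcal{T}^{\dagger}*_L(\mathcal{A}*_M\mathcal{T}^{\dagger})^{\dagger}$ and $\mathcal{C}=(\mathcal{R}^{\dagger}*_N\mathcal{A})^{\dagger}*_K\mathcal{R}^{\dagger}$. Then $\mathcal{B}=\mathcal{A}^{\dagger}$ if and only if $\mathcal{C}=\mathcal{A}_{\pi\dagger}$; and $\mathcal{B}=\mathcal{A}_{\pi\dagger}$ if and only if $\mathcal{C}=\mathcal{A}^{\dagger}$.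
   Context: $\mathbb{C}^{I_1\times\cdots\times I_N}$ denotes the set of complex tensors of order $N$ and dimension $I_1\times\cdots\times I_N$. For $\mathcal{A}\in\mathbb{C}^{I_1\times\cdots\times I_N\times K_1\times\cdots\times K_N}$ and $\mathcal{B}\in\mathbb{C}^{K_1\times\cdots\times K_N\times J_1\times\cdots\times J_M}$, the Einstein product $\mathcal{A}*_N\mathcal{B}$ is defined by $(\mathcal{A}*_N\mathcal{B})_{i_1\dots i_N j_1\dots j_M}=\sum_{k_1,\dots,k_N}a_{i_1\dots i_N k_1\dots k_N}b_{k_1\dots k_N j_1\dots j_M}$; it is associative. $\mathcal{A}^H$ denotes the conjugate transpose. For $\mathcal{A}\in\mathbb{C}^{I_1\times\cdots\times I_N\times J_1\times\cdots\times J_M}$ the Moore–Penrose inverse $\mathcal{A}^{\dagger}$ is the unique $\mathcal{X}\in\mathbb{C}^{J_1\times\cdots\times J_M\times I_1\times\cdots\times I_N}$ with $\mathcal{A}*_M\mathcal{X}*_N\mathcal{A}=\mathcal{A}$, $\mathcal{X}*_N\mathcal{A}*_M\mathcal{X}=\mathcal{X}$, $(\mathcal{A}*_M\mathcal{X})^H=\mathcal{A}*_M\mathcal{X}$, $(\mathcal{X}*_N\mathcal{A})^H=\mathcal{X}*_N\mathcal{A}$. Given the factorization $\mathcal{A}=\mathcal{R}*_K\mathcal{S}*_L\mathcal{T}$, the product Moore–Penrose inverse of $\mathcal{A}$ is $\mathcal{A}_{\pi\dagger}=\mathcal{T}^{\dagger}*_L(\mathcal{R}^{\dagger}*_N\mathcal{A}*_M\mathcal{T}^{\dagger})^{\dagger}*_K\mathcal{R}^{\dagger}$.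 *)

theory Defs
  imports Complex_Main
begin

text \<open>A dimension vector I = [I_1,...,I_N] is a nat list; its multi-indices are
  the lists [i_1,...,i_N] with i_k < I_k (0-based).  A tensor in
  C^{I_1 x...x I_N x J_1 x...x J_M} is represented as a function of the two index
  blocks, vanishing outside the index range.\<close>

definition midx :: "nat list \<Rightarrow> nat list set" where
  "midx D = {is. length is = length D \<and> (\<forall>k<length D. is ! k < D ! k)}"

type_synonym tensor = "nat list \<Rightarrow> nat list \<Rightarrow> complex"

definition tens :: "nat list \<Rightarrow> nat list \<Rightarrow> tensor set" where
  "tens I J = {A. \<forall>is js. (is \<notin> midx I \<or> js \<notin> midx J) \<longrightarrow> A is js = 0}"

definition ein :: "nat list \<Rightarrow> tensor \<Rightarrow> tensor \<Rightarrow> tensor" where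
  "ein K A B = (\<lambda>is js. \<Sum>ks\<in>midx K. A is ks * B ks js)"

definition ctrans :: "tensor \<Rightarrow> tensor" where
  "ctrans A = (\<lambda>js is. cnj (A is js))"

definition is_mpinv :: "nat list \<Rightarrow> nat list \<Rightarrow> tensor \<Rightarrow> tensor \<Rightarrow> bool" where
  "is_mpinv I J A X \<longleftrightarrow> X \<in> tens J I \<and>
     ein I (ein J A X) A = A \<and>
     ein J (ein I X A) X = X \<and>
     ctrans (ein J A X) = ein J A X \<and>
     ctrans (ein I X A) = ein I X A"

definition mpinv :: "nat list \<Rightarrow> nat list \<Rightarrow> tensor \<Rightarrow> tensor" where
  "mpinv I J A = (THE X. is_mpinv I J A X)"

text \<open>Product Moore-Penrose inverse of A = R *_K S *_L T with
  R in C^{I x H}, S in C^{H x G}, T in C^{G x J}.\<close>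
definition pmpinv :: "nat list \<Rightarrow> nat list \<Rightarrow> nat list \<Rightarrow> nat list \<Rightarrow>
    tensor \<Rightarrow> tensor \<Rightarrow> tensor \<Rightarrow> tensor" where
  "pmpinv I J H G R A T =
     ein H (ein G (mpinv G J T) (mpinv H G (ein J (ein I (mpinv I H R) A) (mpinv G J T))))
       (mpinv I H R)"

end

theory Submission
  imports Defs "HOL-Library.Function_Algebras"
begin


lemma finite_midx: "finite (midx D)"
proof -
  have "midx D \<subseteq> {xs. set xs \<subseteq> {..<Suc (Max (set D))} \<and> length xs = length D}"
  proof
    fix xs assume "xs \<in> midx D"
    then have l: "length xs = length D" and lt: "\<forall>k<length D. xs ! k < D ! k" by (auto simp: midx_def)
    have "set xs \<subseteq> {..<Suc (Max (set D))}"
    proof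
      fix x assume "x \<in> set xs"
      then obtain k where k: "k < length xs" "xs ! k = x" by (auto simp: in_set_conv_nth)
      then have "x < D ! k" using l lt by auto
      moreover have "D ! k \<le> Max (set D)" using k l by (intro Max_ge) auto
      ultimately show "x \<in> {..<Suc (Max (set D))}" by auto
    qed
    then show "xs \<in> {xs. set xs \<subseteq> {..<Suc (Max (set D))} \<and> length xs = length D}" using l by auto
  qed
  then show ?thesis by (rule finite_subset) (rule finite_lists_length_eq, simp)
qed

lemma ein_assoc: "ein L (ein K A B) C = ein K A (ein L B C)"
  unfolding ein_def
  by (rule ext, rule ext, simp add: sum_distrib_left sum_distrib_right mult.assoc, rule sum.swap)

lemma ctrans_ein: "ctrans (ein K A B) = ein K (ctrans B) (ctrans A)"
  unfolding ctrans_def ein_def by (simp add: mult.commute)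

lemma ctrans_ctrans[simp]: "ctrans (ctrans A) = A"
  unfolding ctrans_def by simp

lemma mp_unique:
  assumes X: "is_mpinv I J A X" and Y: "is_mpinv I J A Y"
  shows "X = Y"
proof -
  have x1: "ein I (ein J A X) A = A" and x2: "ein J (ein I X A) X = X"
    and x3: "ctrans (ein J A X) = ein J A X" and x4: "ctrans (ein I X A) = ein I X A"
    using X by (auto simp: is_mpinv_def)
  have y1: "ein I (ein J A Y) A = A" and y2: "ein J (ein I Y A) Y = Y"
    and y3: "ctrans (ein J A Y) = ein J A Y" and y4: "ctrans (ein I Y A) = ein I Y A"
    using Y by (auto simp: is_mpinv_def)
  have cA: "ctrans A = ein I (ctrans A) (ein J A Y)"
    by (metis ctrans_ein y1 y3)
  have cA': "ctrans A = ein J (ein I X A) (ctrans A)"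
    by (metis ctrans_ein x1 x4 ein_assoc)
  have "X = ein I X (ctrans (ein J A X))" using x2 x3 by (simp add: ein_assoc)
  also have "\<dots> = ein I X (ein J (ctrans X) (ctrans A))"
    by (simp add: ctrans_ein)
  also have "\<dots> = ein I X (ein J (ctrans X) (ein I (ctrans A) (ein J A Y)))"
    by (metis cA)
  also have "\<dots> = ein I X (ein I (ctrans (ein J A X)) (ein J A Y))"
    by (simp add: ctrans_ein ein_assoc)
  also have "\<dots> = ein J (ein I X A) Y"
    using x2 x3 by (metis ein_assoc)
  finally have 1: "X = ein J (ein I X A) Y" .
  have "Y = ein J (ctrans (ein I Y A)) Y" using y2 y4 by simp
  also have "\<dots> = ein I (ctrans A) (ein J (ctrans Y) Y)"
    by (simp add: ctrans_ein ein_assoc)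
  also have "\<dots> = ein I (ein J (ein I X A) (ctrans A)) (ein J (ctrans Y) Y)"
    by (metis cA')
  also have "\<dots> = ein J (ein I X A) (ein J (ctrans (ein I Y A)) Y)"
    by (simp add: ctrans_ein ein_assoc)
  also have "\<dots> = ein J (ein I X A) Y"
    using y2 y4 by (metis ein_assoc)
  finally show ?thesis using 1 by simp
qed



lemma ein_tens: "A \<in> tens I K \<Longrightarrow> B \<in> tens K J \<Longrightarrow> ein K A B \<in> tens I J"
  unfolding tens_def ein_def by auto

lemma ctrans_tens: "A \<in> tens I J \<Longrightarrow> ctrans A \<in> tens J I"
  unfolding tens_def ctrans_def by auto

lemma gram_zero:
  assumes E0: "\<And>is js. is \<notin> midx I \<Longrightarrow> E is js = 0"
    and G: "\<And>js. ein I (ctrans E) E js js = 0"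
  shows "E is js = 0"
proof (cases "is \<in> midx I")
  case False then show ?thesis using E0 by simp
next
  case True
  have "(\<Sum>k\<in>midx I. cnj (E k js) * E k js) = 0" using G[of js] by (simp add: ein_def ctrans_def)
  moreover have "cnj (E k js) * E k js = complex_of_real ((cmod (E k js))\<^sup>2)" for k
    by (subst complex_norm_square) (simp add: mult.commute)
  ultimately have "complex_of_real (\<Sum>k\<in>midx I. (cmod (E k js))\<^sup>2) = 0"
    by (simp only: of_real_sum)
  then have "(\<Sum>k\<in>midx I. (cmod (E k js))\<^sup>2) = 0" by (simp only: of_real_eq_0_iff)
  then have "\<forall>k\<in>midx I. (cmod (E k js))\<^sup>2 = 0"
    by (subst (asm) sum_nonneg_eq_0_iff) (auto simp: finite_midx)
  then show ?thesis using True by simp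
qed

lemma ein_zero_right: "ein K A (\<lambda>_ _. 0) = (\<lambda>_ _. 0)"
  unfolding ein_def by simp

lemma cancel:
  assumes A: "A \<in> tens I J"
    and h: "ein I (ctrans A) (ein J A Z) = ein I (ctrans A) (ein J A W)"
  shows "ein J A Z = ein J A W"
proof -
  define V where "V = (\<lambda>i j. Z i j - W i j)"
  define E where "E = ein J A V"
  have Ed: "E i j = ein J A Z i j - ein J A W i j" for i j
    unfolding E_def V_def ein_def by (simp add: right_diff_distrib sum_subtractf)
  have AE: "ein I (ctrans A) E = (\<lambda>_ _. 0)"
  proof (intro ext)
    fix i j
    have "ein I (ctrans A) E i j = ein I (ctrans A) (ein J A Z) i j - ein I (ctrans A) (ein J A W) i j"
      unfolding ein_def Ed by (simp add: right_diff_distrib sum_subtractf)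
    then show "ein I (ctrans A) E i j = 0" using h by simp
  qed
  have EE: "ein I (ctrans E) E = (\<lambda>_ _. 0)"
    unfolding E_def by (simp add: ctrans_ein ein_assoc AE[unfolded E_def] ein_zero_right)
  have E0: "is \<notin> midx I \<Longrightarrow> E is js = 0" for "is" js
    using A unfolding E_def ein_def tens_def by auto
  have G: "ein I (ctrans E) E js js = 0" for js using EE by simp
  have "E i j = 0" for i j using gram_zero[of I E, OF E0 G] by blast
  then show ?thesis using Ed by (auto simp: fun_eq_iff)
qed



definition idt :: "nat list \<Rightarrow> tensor" where
  "idt J = (\<lambda>is js. if is = js \<and> is \<in> midx J then 1 else 0)"

lemma idt_tens: "idt J \<in> tens J J"
  unfolding tens_def idt_def by auto

lemma ein_idt_left:
  assumes "X \<in> tens J K" shows "ein J (idt J) X = X"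
proof (intro ext)
  fix i j
  have "ein J (idt J) X i j = (\<Sum>ks\<in>midx J. if i = ks then (if i \<in> midx J then X ks j else 0) else 0)"
    unfolding ein_def idt_def by (intro sum.cong) auto
  also have "\<dots> = (if i \<in> midx J then X i j else 0)" by (simp add: sum.delta' finite_midx)
  also have "\<dots> = X i j" using assms by (auto simp: tens_def)
  finally show "ein J (idt J) X i j = X i j" .
qed

lemma ein_idt_right:
  assumes "X \<in> tens K J" shows "ein J X (idt J) = X"
proof (intro ext)
  fix i j
  have "ein J X (idt J) i j = (\<Sum>ks\<in>midx J. if ks = j then (if j \<in> midx J then X i ks else 0) else 0)"
    unfolding ein_def idt_def by (intro sum.cong) auto
  also have "\<dots> = (if j \<in> midx J then X i j else 0)" by (simp add: sum.delta finite_midx)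
  also have "\<dots> = X i j" using assms by (auto simp: tens_def)
  finally show "ein J X (idt J) i j = X i j" .
qed

fun mpow :: "nat list \<Rightarrow> tensor \<Rightarrow> nat \<Rightarrow> tensor" where
  "mpow J M 0 = idt J"
| "mpow J M (Suc k) = ein J M (mpow J M k)"

lemma mpow_tens: "M \<in> tens J J \<Longrightarrow> mpow J M k \<in> tens J J"
  by (induct k) (auto simp: idt_tens ein_tens)

lemma mpow_add: assumes M: "M \<in> tens J J" shows "mpow J M (a + b) = ein J (mpow J M a) (mpow J M b)"
  by (induct a) (auto simp: ein_idt_left[OF mpow_tens[OF M]] ein_assoc)

lemma mpow_one: assumes M: "M \<in> tens J J" shows "mpow J M 1 = M"
  by (simp add: ein_idt_right[OF M])

lemma mpow_comm: assumes M: "M \<in> tens J J" shows "ein J M (mpow J M k) = ein J (mpow J M k) M"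
  using mpow_add[OF M, of k 1] mpow_add[OF M, of 1 k] mpow_one[OF M] by (simp only: add.commute)

definition tsc :: "complex \<Rightarrow> tensor \<Rightarrow> tensor" where
  "tsc c f = (\<lambda>i j. c * f i j)"

lemma vs: "vector_space tsc"
  unfolding vector_space_def tsc_def by (auto simp: fun_eq_iff algebra_simps)

lemma md: "module tsc"
  using vs by (simp add: module_iff_vector_space)

lemma sum_app: "(sum f F) i j = (\<Sum>x\<in>F. f x i j)"
  by (induct F rule: infinite_finite_induct) auto

lemma ein_sum_right: "ein K A (sum f F) = (\<Sum>x\<in>F. ein K A (f x))"
  unfolding ein_def by (auto simp: fun_eq_iff sum_app sum_distrib_left intro: sum.swap)

lemma ein_sum_left: "ein K (sum f F) B = (\<Sum>x\<in>F. ein K (f x) B)"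
  unfolding ein_def by (auto simp: fun_eq_iff sum_app sum_distrib_right intro: sum.swap)

lemma ein_tsc_right: "ein K A (tsc c B) = tsc c (ein K A B)"
  unfolding ein_def tsc_def by (auto simp: fun_eq_iff sum_distrib_left ac_simps)

lemma ein_tsc_left: "ein K (tsc c A) B = tsc c (ein K A B)"
  unfolding ein_def tsc_def by (auto simp: fun_eq_iff sum_distrib_left ac_simps)

lemma sum_tens: "(\<And>x. x \<in> F \<Longrightarrow> f x \<in> tens I J) \<Longrightarrow> sum f F \<in> tens I J"
  unfolding tens_def by (auto simp: sum_app)

lemma tsc_tens: "X \<in> tens I J \<Longrightarrow> tsc c X \<in> tens I J"
  unfolding tens_def tsc_def by auto

definition eb :: "nat list \<Rightarrow> nat list \<Rightarrow> tensor" where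
  "eb a b = (\<lambda>i j. if i = a \<and> j = b then 1 else 0)"

lemma basis_decomp:
  assumes "M \<in> tens J J"
  shows "M = (\<Sum>p\<in>midx J \<times> midx J. tsc (M (fst p) (snd p)) (eb (fst p) (snd p)))"
proof (intro ext)
  fix i j
  have "(\<Sum>p\<in>midx J \<times> midx J. tsc (M (fst p) (snd p)) (eb (fst p) (snd p))) i j
      = (\<Sum>p\<in>midx J \<times> midx J. if p = (i, j) then M i j else 0)"
    unfolding sum_app tsc_def eb_def by (intro sum.cong) auto
  also have "\<dots> = (if (i, j) \<in> midx J \<times> midx J then M i j else 0)"
    by (rule sum.delta) (simp add: finite_midx)
  also have "\<dots> = M i j" using assms unfolding tens_def by auto
  finally show "M i j = (\<Sum>p\<in>midx J \<times> midx J. tsc (M (fst p) (snd p)) (eb (fst p) (snd p))) i j" by simp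
qed

lemma tens_span:
  assumes "M \<in> tens J J"
  shows "M \<in> module.span tsc ((\<lambda>p. eb (fst p) (snd p)) ` (midx J \<times> midx J))"
  apply (subst basis_decomp[OF assms])
  apply (rule module.span_sum[OF md])
  apply (rule module.span_scale[OF md])
  apply (rule module.span_base[OF md])
  by auto



lemma descend:
  assumes M: "M \<in> tens J J" and H: "ctrans M = M"
  shows "mpow J M (Suc r) = ein J (mpow J M (Suc (Suc r))) q \<Longrightarrow> M = ein J M (ein J M q)"
proof (induct r)
  case 0
  have m1: "mpow J M (Suc 0) = M" using mpow_one[OF M] by (simp only: One_nat_def)
  have m2: "mpow J M (Suc (Suc 0)) = ein J M M"
    using mpow_add[OF M, of 1 1] mpow_one[OF M] by (simp only: One_nat_def add_Suc add_0)
  have "M = ein J (ein J M M) q" using 0 unfolding m1 m2 .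
  then show ?case using ein_assoc[of J J M M q] by (rule trans)
next
  case (Suc r)
  have e: "mpow J M (Suc (Suc r)) = ein J M (ein J M (mpow J M r))" by simp
  have f: "ein J (mpow J M (Suc (Suc (Suc r)))) q = ein J M (ein J M (ein J (mpow J M (Suc r)) q))"
    by (simp add: ein_assoc)
  have "ein J (ctrans M) (ein J M (mpow J M r)) = ein J (ctrans M) (ein J M (ein J (mpow J M (Suc r)) q))"
    unfolding H by (rule Suc.prems[unfolded e f])
  then have c: "ein J M (mpow J M r) = ein J M (ein J (mpow J M (Suc r)) q)"
    by (rule cancel[OF M])
  have "mpow J M (Suc r) = ein J M (mpow J M r)" by simp
  also have "\<dots> = ein J M (ein J (mpow J M (Suc r)) q)" by (rule c)
  also have "\<dots> = ein J (mpow J M (Suc (Suc r))) q"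
    by (simp only: mpow.simps(2)[of J M "Suc r"] ein_assoc)
  finally show ?case by (rule Suc.hyps)
qed

lemma comm_sum:
  "(\<And>x. x \<in> F \<Longrightarrow> ein J (f x) M = ein J M (f x)) \<Longrightarrow> ein J (sum f F) M = ein J M (sum f F)"
  by (simp add: ein_sum_left ein_sum_right)

lemma rel_exists:
  assumes M: "M \<in> tens J J"
  shows "\<exists>r q. q \<in> tens J J \<and> ein J q M = ein J M q \<and> mpow J M r = ein J (mpow J M (Suc r)) q"
proof -
  define n where "n = card (midx J \<times> midx J)"
  define pw where "pw = mpow J M"
  show ?thesis
  proof (cases "inj_on pw {0..n}")
    case False
    then obtain i j where ij: "i \<in> {0..n}" "j \<in> {0..n}" "i \<noteq> j" "pw i = pw j"
      unfolding inj_on_def by blast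
    then obtain a b where ab: "a < b" "pw a = pw b"
      by (metis linorder_neqE_nat)
    define q where "q = pw (b - Suc a)"
    have "pw a = ein J (pw (Suc a)) q"
      using ab mpow_add[OF M, of "Suc a" "b - Suc a"] unfolding q_def pw_def by simp
    moreover have "q \<in> tens J J" unfolding q_def pw_def by (rule mpow_tens[OF M])
    moreover have "ein J q M = ein J M q" unfolding q_def pw_def by (simp add: mpow_comm[OF M])
    ultimately show ?thesis unfolding pw_def by blast
  next
    case inj: True
    define Bs where "Bs = (\<lambda>p. eb (fst p) (snd p)) ` (midx J \<times> midx J)"
    have fB: "finite Bs" unfolding Bs_def by (simp add: finite_midx)
    have cB: "card Bs \<le> n" unfolding Bs_def n_def by (rule card_image_le) (simp add: finite_midx)
    have sub: "pw ` {0..n} \<subseteq> module.span tsc Bs"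
      unfolding Bs_def pw_def using tens_span[OF mpow_tens[OF M]] by blast
    have cS: "card (pw ` {0..n}) = Suc n" using inj by (simp add: card_image)
    have "module.dependent tsc (pw ` {0..n})"
    proof (rule ccontr)
      assume "\<not> module.dependent tsc (pw ` {0..n})"
      then have "card (pw ` {0..n}) \<le> card Bs"
        using vector_space.independent_span_bound[OF vs fB _ sub] by blast
      then show False using cS cB by simp
    qed
    then obtain Tt u where Tt: "finite Tt" "Tt \<subseteq> pw ` {0..n}" "(\<Sum>v\<in>Tt. tsc (u v) v) = 0"
      and v: "\<exists>v\<in>Tt. u v \<noteq> 0"
      unfolding module.dependent_explicit[OF md] by blast
    define F where "F = {k \<in> {0..n}. pw k \<in> Tt \<and> u (pw k) \<noteq> 0}"
    define c where "c k = u (pw k)" for k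
    have fF: "finite F" unfolding F_def by simp
    have imF: "pw ` F = {v \<in> Tt. u v \<noteq> 0}" unfolding F_def using Tt(2) by auto
    have injF: "inj_on pw F" using inj unfolding F_def by (rule inj_on_subset) auto
    have "(\<Sum>v\<in>Tt. tsc (u v) v) = (\<Sum>v\<in>{v \<in> Tt. u v \<noteq> 0}. tsc (u v) v)"
      by (rule sum.mono_neutral_right) (auto simp: Tt(1) tsc_def fun_eq_iff)
    also have "\<dots> = (\<Sum>k\<in>F. tsc (c k) (pw k))"
      unfolding imF[symmetric] c_def by (rule sum.reindex[OF injF, unfolded comp_def])
    finally have rel: "(\<Sum>k\<in>F. tsc (c k) (pw k)) = 0" using Tt(3) by simp
    have Fne: "F \<noteq> {}"
    proof -
      obtain w where w: "w \<in> Tt" "u w \<noteq> 0" using v by blast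
      then obtain k where "k \<in> {0..n}" "w = pw k" using Tt(2) by blast
      then have "k \<in> F" using w unfolding F_def by simp
      then show ?thesis by blast
    qed
    define r where "r = Min F"
    have rF: "r \<in> F" unfolding r_def using fF Fne by simp
    have rmin: "k \<in> F \<Longrightarrow> r \<le> k" for k unfolding r_def using fF by simp
    have cr: "c r \<noteq> 0" using rF unfolding F_def c_def by simp
    define S0 where "S0 = (\<Sum>k\<in>F - {r}. tsc (c k) (pw (k - Suc r)))"
    have split: "(\<Sum>k\<in>F. tsc (c k) (pw k)) = tsc (c r) (pw r) + (\<Sum>k\<in>F - {r}. tsc (c k) (pw k))"
      using sum.remove[OF fF rF] by simp
    have "(\<Sum>k\<in>F - {r}. tsc (c k) (pw k)) = (\<Sum>k\<in>F - {r}. ein J (pw (Suc r)) (tsc (c k) (pw (k - Suc r))))"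
    proof (rule sum.cong)
      fix k assume k: "k \<in> F - {r}"
      then have "r < k" using rmin by force
      then have "pw k = ein J (pw (Suc r)) (pw (k - Suc r))"
        using mpow_add[OF M, of "Suc r" "k - Suc r"] unfolding pw_def by simp
      then show "tsc (c k) (pw k) = ein J (pw (Suc r)) (tsc (c k) (pw (k - Suc r)))"
        by (simp add: ein_tsc_right)
    qed simp
    also have "\<dots> = ein J (pw (Suc r)) S0" unfolding S0_def by (simp add: ein_sum_right)
    finally have "tsc (c r) (pw r) + ein J (pw (Suc r)) S0 = 0" using rel split by simp
    then have pt: "c r * pw r i j + ein J (pw (Suc r)) S0 i j = 0" for i j
      by (auto simp: fun_eq_iff tsc_def)
    define q where "q = tsc (- 1 / c r) S0"
    have "pw r = ein J (pw (Suc r)) q"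
    proof (intro ext)
      fix i j
      have "pw r i j = (- 1 / c r) * ein J (pw (Suc r)) S0 i j"
        using pt[of i j] cr by (simp add: field_simps add_eq_0_iff)
      then show "pw r i j = ein J (pw (Suc r)) q i j" unfolding q_def ein_tsc_right by (simp add: tsc_def)
    qed
    moreover have "q \<in> tens J J" unfolding q_def S0_def pw_def
      by (intro tsc_tens sum_tens mpow_tens[OF M])
    moreover have "ein J q M = ein J M q" unfolding q_def S0_def pw_def
      by (simp add: ein_tsc_left ein_tsc_right comm_sum mpow_comm[OF M])
    ultimately show ?thesis unfolding pw_def by blast
  qed
qed

lemma Q_exists:
  assumes M: "M \<in> tens J J" and H: "ctrans M = M"
  shows "\<exists>Q. Q \<in> tens J J \<and> ein J Q M = ein J M Q \<and> ein J M (ein J Q M) = M"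
proof -
  obtain r q where q: "q \<in> tens J J" "ein J q M = ein J M q" "mpow J M r = ein J (mpow J M (Suc r)) q"
    using rel_exists[OF M] by blast
  have Mq: "M = ein J M (ein J M q)"
  proof (cases r)
    case 0
    have m1: "mpow J M (Suc 0) = M" using mpow_one[OF M] by (simp only: One_nat_def)
    have i: "idt J = ein J M q" using q(3)[unfolded 0 mpow.simps(1) m1] .
    have "M = ein J M (idt J)" using ein_idt_right[OF M] by simp
    from this[unfolded i] show ?thesis .
  next
    case (Suc r')
    then show ?thesis using descend[OF M H] q(3) by blast
  qed
  have "ein J M (ein J q M) = M" unfolding q(2) using Mq[symmetric] .
  then show ?thesis using q(1,2) by blast
qed



lemma mp_exists:
  assumes A: "A \<in> tens I J"
  shows "\<exists>X. is_mpinv I J A X"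
proof -
  define M where "M = ein I (ctrans A) A"
  have tcA: "ctrans A \<in> tens J I" by (rule ctrans_tens[OF A])
  have tM: "M \<in> tens J J" unfolding M_def by (rule ein_tens[OF tcA A])
  have hM: "ctrans M = M" unfolding M_def by (simp add: ctrans_ein)
  obtain Q where Q: "Q \<in> tens J J" "ein J Q M = ein J M Q" "ein J M (ein J Q M) = M"
    using Q_exists[OF tM hM] by blast
  define P where "P = ein J Q M"
  have PM: "P = ein J M Q" unfolding P_def using Q(2) .
  have MP: "ein J M P = M" unfolding P_def using Q(3) .
  have cP: "ctrans P = ein J M (ctrans Q)" unfolding P_def by (simp add: ctrans_ein hM)
  have "ein J P (ctrans P) = ctrans P"
  proof -
    have "ein J P (ctrans P) = ein J (ein J M P) (ctrans Q)"
      unfolding cP by (subst (1) PM) (simp add: P_def ein_assoc)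
    also have "\<dots> = ctrans P" unfolding MP cP ..
    finally show ?thesis .
  qed
  then have hP: "ctrans P = P"
    by (metis ctrans_ctrans ctrans_ein)
  have QhM: "ein J (ctrans Q) M = P"
  proof -
    have "ein J (ctrans Q) M = ctrans (ein J M Q)" by (simp add: ctrans_ein hM)
    also have "\<dots> = P" using PM hP by simp
    finally show ?thesis .
  qed
  have AP: "ein J A P = A"
  proof -
    have "ein I (ctrans A) (ein J A P) = ein I (ctrans A) (ein J A (idt J))"
      using MP ein_idt_right[OF tM] unfolding M_def by (simp add: ein_assoc)
    then have "ein J A P = ein J A (idt J)" by (rule cancel[OF A])
    then show ?thesis using ein_idt_right[OF A] by simp
  qed
  define W where "W = ein J (ctrans Q) (ctrans A)"
  define X where "X = ein J Q (ein J M W)"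
  have tX: "X \<in> tens J I" unfolding X_def W_def
    by (intro ein_tens Q(1) tM ctrans_tens tcA)
  have XA: "ein I X A = P"
  proof -
    have "ein I X A = ein J Q (ein J M (ein J (ctrans Q) M))"
      unfolding X_def W_def M_def by (simp add: ein_assoc)
    also have "\<dots> = P" unfolding QhM MP by (simp add: P_def)
    finally show ?thesis .
  qed
  have e1: "ein I (ein J A X) A = A" using XA AP by (simp add: ein_assoc)
  have e2: "ein J (ein I X A) X = X"
  proof -
    have "ein J (ein I X A) X = ein J Q (ein J (ein J M (ein J Q M)) W)"
      by (subst XA) (simp add: P_def X_def ein_assoc)
    also have "\<dots> = X" unfolding Q(3) X_def ..
    finally show ?thesis .
  qed
  have e3: "ctrans (ein J A X) = ein J A X"
    unfolding X_def W_def using hM by (simp add: ctrans_ein ein_assoc)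
  have e4: "ctrans (ein I X A) = ein I X A" unfolding XA by (rule hP)
  show ?thesis unfolding is_mpinv_def using tX e1 e2 e3 e4 by blast
qed



lemma ext_eq: "ein K P Q = R \<Longrightarrow> ein K P (ein L Q Z) = ein L R Z"
  by (metis ein_assoc)

lemma mpinv_is: assumes "A \<in> tens I J" shows "is_mpinv I J A (mpinv I J A)"
proof -
  obtain X where X: "is_mpinv I J A X" using mp_exists[OF assms] by blast
  show ?thesis unfolding mpinv_def
    by (rule theI[where P="is_mpinv I J A", OF X]) (rule mp_unique[OF _ X])
qed

lemma mpinv_eq: "A \<in> tens I J \<Longrightarrow> (X = mpinv I J A) = is_mpinv I J A X"
  using mpinv_is[of A I J] mp_unique[of I J A] by blast

lemma B_char:
  assumes T: "is_mpinv G J T Tp" and AT: "ein G (ein J A Tp) T = A"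
    and Xp: "is_mpinv I G (ein J A Tp) Xp"
  shows "is_mpinv I J A (ein G Tp Xp) \<longleftrightarrow>
     ctrans (ein G Tp (ein G (ein I Xp (ein J A Tp)) T)) = ein G Tp (ein G (ein I Xp (ein J A Tp)) T)"
proof -
  define X where "X = ein J A Tp"
  have AX: "A = ein G X T" using AT X_def by simp
  have t1: "ein G (ein J T Tp) T = T" and t2: "ein J (ein G Tp T) Tp = Tp"
    and t3: "ctrans (ein J T Tp) = ein J T Tp" and t4: "ctrans (ein G Tp T) = ein G Tp T"
    and t5: "Tp \<in> tens J G"
    using T by (auto simp: is_mpinv_def)
  have x1: "ein I (ein G X Xp) X = X" and x2: "ein G (ein I Xp X) Xp = Xp"
    and x3: "ctrans (ein G X Xp) = ein G X Xp" and x4: "ctrans (ein I Xp X) = ein I Xp X"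
    and x5: "Xp \<in> tens G I"
    using Xp by (auto simp: is_mpinv_def X_def)
  have xt: "ein G X (ein J T Tp) = X" unfolding X_def ein_assoc using t2[unfolded ein_assoc] by simp
  note r = x1[unfolded ein_assoc] x2[unfolded ein_assoc] xt
    ext_eq[OF x1[unfolded ein_assoc], unfolded ein_assoc]
    ext_eq[OF x2[unfolded ein_assoc], unfolded ein_assoc] ext_eq[OF xt, unfolded ein_assoc]
  have BA: "ein I (ein G Tp Xp) A = ein G Tp (ein G (ein I Xp X) T)"
    by (simp add: AX ein_assoc)
  have "is_mpinv I J A (ein G Tp Xp) \<longleftrightarrow> ctrans (ein I (ein G Tp Xp) A) = ein I (ein G Tp Xp) A"
  proof -
    have "ein G Tp Xp \<in> tens J I" using t5 x5 by (rule ein_tens)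
    moreover have "ein I (ein J A (ein G Tp Xp)) A = A"
      by (subst (1 2 3) AX) (simp add: ein_assoc r)
    moreover have "ein J (ein I (ein G Tp Xp) A) (ein G Tp Xp) = ein G Tp Xp"
      by (subst AX) (simp add: ein_assoc r)
    moreover have "ctrans (ein J A (ein G Tp Xp)) = ein J A (ein G Tp Xp)"
      using x3 by (simp add: X_def ein_assoc)
    ultimately show ?thesis unfolding is_mpinv_def by blast
  qed
  then show ?thesis using BA X_def by simp
qed



lemma C_char:
  assumes R: "is_mpinv I H R Rp" and RA: "ein H R (ein I Rp A) = A"
    and Yp: "is_mpinv H J (ein I Rp A) Yp"
  shows "is_mpinv I J A (ein H Yp Rp) \<longleftrightarrow>
     ctrans (ein H R (ein H (ein J (ein I Rp A) Yp) Rp)) = ein H R (ein H (ein J (ein I Rp A) Yp) Rp)"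
proof -
  define Y where "Y = ein I Rp A"
  have AY: "A = ein H R Y" using RA Y_def by simp
  have r1: "ein I (ein H R Rp) R = R" and r2: "ein H (ein I Rp R) Rp = Rp"
    and r5: "Rp \<in> tens H I"
    using R by (auto simp: is_mpinv_def)
  have y1: "ein H (ein J Y Yp) Y = Y" and y2: "ein J (ein H Yp Y) Yp = Yp"
    and y3: "ctrans (ein J Y Yp) = ein J Y Yp" and y4: "ctrans (ein H Yp Y) = ein H Yp Y"
    and y5: "Yp \<in> tens J H"
    using Yp by (auto simp: is_mpinv_def Y_def)
  have ry: "ein I Rp (ein H R Y) = Y" unfolding Y_def using ext_eq[OF r2[unfolded ein_assoc], unfolded ein_assoc] by simp
  note r = y1[unfolded ein_assoc] y2[unfolded ein_assoc] ry
    ext_eq[OF y1[unfolded ein_assoc], unfolded ein_assoc]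
    ext_eq[OF y2[unfolded ein_assoc], unfolded ein_assoc] ext_eq[OF ry, unfolded ein_assoc]
  have AC: "ein J A (ein H Yp Rp) = ein H R (ein H (ein J Y Yp) Rp)"
    by (simp add: AY ein_assoc)
  have "is_mpinv I J A (ein H Yp Rp) \<longleftrightarrow> ctrans (ein J A (ein H Yp Rp)) = ein J A (ein H Yp Rp)"
  proof -
    have "ein H Yp Rp \<in> tens J I" using y5 r5 by (rule ein_tens)
    moreover have "ein I (ein J A (ein H Yp Rp)) A = A"
      by (subst (1 2 3) AY) (simp add: ein_assoc r)
    moreover have "ein J (ein I (ein H Yp Rp) A) (ein H Yp Rp) = ein H Yp Rp"
      by (subst AY) (simp add: ein_assoc r)
    moreover have "ctrans (ein I (ein H Yp Rp) A) = ein I (ein H Yp Rp) A"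
    proof -
      have "ein I (ein H Yp Rp) A = ein H Yp Y" by (subst AY) (simp add: ein_assoc r)
      then show ?thesis using y4 by simp
    qed
    ultimately show ?thesis unfolding is_mpinv_def by blast
  qed
  then show ?thesis using AC Y_def by simp
qed

lemma P_eq:
  assumes X: "is_mpinv I G X Xp" and Y: "is_mpinv H G Y Yp"
    and XU: "X = ein H U Y" and YV: "Y = ein I V X"
  shows "ein I Xp X = ein H Yp Y"
proof -
  have x1: "ein I (ein G X Xp) X = X" and x4: "ctrans (ein I Xp X) = ein I Xp X"
    using X by (auto simp: is_mpinv_def)
  have y1: "ein H (ein G Y Yp) Y = Y" and y4: "ctrans (ein H Yp Y) = ein H Yp Y"
    using Y by (auto simp: is_mpinv_def)
  have a: "ein G X (ein H Yp Y) = X" using y1 XU by (metis ein_assoc)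
  have b: "ein G Y (ein I Xp X) = Y" using x1 YV by (metis ein_assoc)
  have c: "ein G (ein I Xp X) (ein H Yp Y) = ein I Xp X" using a by (simp add: ein_assoc)
  have d: "ein G (ein H Yp Y) (ein I Xp X) = ein H Yp Y" using b by (simp add: ein_assoc)
  have "ein I Xp X = ctrans (ein I Xp X)" using x4 by simp
  also have "\<dots> = ctrans (ein G (ein I Xp X) (ein H Yp Y))" using c by simp
  also have "\<dots> = ein G (ein H Yp Y) (ein I Xp X)"
    by (simp only: ctrans_ein[of G "ein I Xp X" "ein H Yp Y"] x4 y4)
  also have "\<dots> = ein H Yp Y" using d .
  finally show ?thesis .
qed

lemma Q_eq:
  assumes Y: "is_mpinv H J Y Yp" and Z: "is_mpinv H G Z Zp"
    and YU: "Y = ein G Z U" and ZV: "Z = ein J Y V"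
  shows "ein J Y Yp = ein G Z Zp"
proof -
  have y1: "ein H (ein J Y Yp) Y = Y" and y3: "ctrans (ein J Y Yp) = ein J Y Yp"
    using Y by (auto simp: is_mpinv_def)
  have z1: "ein H (ein G Z Zp) Z = Z" and z3: "ctrans (ein G Z Zp) = ein G Z Zp"
    using Z by (auto simp: is_mpinv_def)
  have a: "ein H (ein G Z Zp) Y = Y" using z1 YU by (metis ein_assoc)
  have b: "ein H (ein J Y Yp) Z = Z" using y1 ZV by (metis ein_assoc)
  have c: "ein H (ein G Z Zp) (ein J Y Yp) = ein J Y Yp" using a by (simp add: ein_assoc[symmetric])
  have d: "ein H (ein J Y Yp) (ein G Z Zp) = ein G Z Zp" using b by (simp add: ein_assoc[symmetric])
  have "ein J Y Yp = ctrans (ein J Y Yp)" using y3 by simp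
  also have "\<dots> = ctrans (ein H (ein G Z Zp) (ein J Y Yp))" using c by simp
  also have "\<dots> = ein H (ein J Y Yp) (ein G Z Zp)"
    by (simp only: ctrans_ein[of H "ein G Z Zp" "ein J Y Yp"] y3 z3)
  also have "\<dots> = ein G Z Zp" using d .
  finally show ?thesis .
qed

lemma L1:
  assumes N: "is_mpinv H J N Np" and NN: "N = ein I Rp N0" and R: "is_mpinv I H R Rp"
  shows "ein H Np (ein I Rp R) = Np"
proof -
  have n1: "ein J (ein H Np N) Np = Np" and n3: "ctrans (ein J N Np) = ein J N Np"
    using N by (auto simp: is_mpinv_def)
  have r2: "ein H (ein I Rp R) Rp = Rp" and r4: "ctrans (ein I Rp R) = ein I Rp R"
    using R by (auto simp: is_mpinv_def)
  have cR: "ctrans Rp = ein H (ctrans Rp) (ein I Rp R)"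
    by (metis r2 r4 ctrans_ein)
  have cN: "ctrans N = ein H (ctrans N) (ein I Rp R)"
  proof -
    have "ctrans N = ein I (ctrans N0) (ctrans Rp)" using NN by (simp add: ctrans_ein)
    also have "\<dots> = ein I (ctrans N0) (ein H (ctrans Rp) (ein I Rp R))" by (metis cR)
    also have "\<dots> = ein H (ctrans N) (ein I Rp R)" using NN by (simp add: ctrans_ein ein_assoc)
    finally show ?thesis .
  qed
  have e: "Np = ein H Np (ein J (ctrans Np) (ctrans N))"
    using n1 n3 by (metis ein_assoc ctrans_ein)
  also have "\<dots> = ein H Np (ein J (ctrans Np) (ein H (ctrans N) (ein I Rp R)))" by (metis cN)
  also have "\<dots> = ein H (ein H Np (ein J (ctrans Np) (ctrans N))) (ein I Rp R)"
    by (simp add: ein_assoc)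
  also have "\<dots> = ein H Np (ein I Rp R)" using e by simp
  finally show ?thesis by simp
qed

lemma L2:
  assumes N: "is_mpinv I G N Np" and NN: "N = ein J N0 Tp" and T: "is_mpinv G J T Tp"
  shows "ein J T (ein G Tp Np) = Np"
proof -
  have n2: "ein G (ein I Np N) Np = Np" and n4: "ctrans (ein I Np N) = ein I Np N"
    using N by (auto simp: is_mpinv_def)
  have t2: "ein J (ein G Tp T) Tp = Tp" and t3: "ctrans (ein J T Tp) = ein J T Tp"
    using T by (auto simp: is_mpinv_def)
  have cT: "ctrans Tp = ein G (ein J T Tp) (ctrans Tp)"
    by (metis t2 t3 ctrans_ein ein_assoc)
  have cN: "ctrans N = ein G (ein J T Tp) (ctrans N)"
  proof -
    have "ctrans N = ein J (ctrans Tp) (ctrans N0)" using NN by (simp add: ctrans_ein)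
    also have "\<dots> = ein J (ein G (ein J T Tp) (ctrans Tp)) (ctrans N0)" by (metis cT)
    also have "\<dots> = ein G (ein J T Tp) (ctrans N)" using NN by (simp add: ctrans_ein ein_assoc)
    finally show ?thesis .
  qed
  have e: "Np = ein I (ctrans N) (ein G (ctrans Np) Np)"
    using n2 n4 by (metis ein_assoc ctrans_ein)
  also have "\<dots> = ein I (ein G (ein J T Tp) (ctrans N)) (ein G (ctrans Np) Np)" by (metis cN)
  also have "\<dots> = ein G (ein J T Tp) (ein I (ctrans N) (ein G (ctrans Np) Np))"
    by (simp add: ein_assoc)
  also have "\<dots> = ein G (ein J T Tp) Np" using e by simp
  finally show ?thesis by (simp add: ein_assoc)
qed



theorem theorem3p10:
  fixes I J H G :: "nat list" and R S T A B C :: tensor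
  assumes "I \<noteq> []" "J \<noteq> []" "H \<noteq> []" "G \<noteq> []"
    and "\<forall>d\<in>set I. d > 0" "\<forall>d\<in>set J. d > 0" "\<forall>d\<in>set H. d > 0" "\<forall>d\<in>set G. d > 0"
    and "R \<in> tens I H" "S \<in> tens H G" "T \<in> tens G J"
    and "A = ein G (ein H R S) T"
    and "B = ein G (mpinv G J T) (mpinv I G (ein J A (mpinv G J T)))"
    and "C = ein H (mpinv H J (ein I (mpinv I H R) A)) (mpinv I H R)"
  shows "(B = mpinv I J A \<longleftrightarrow> C = pmpinv I J H G R A T) \<and>
         (B = pmpinv I J H G R A T \<longleftrightarrow> C = mpinv I J A)"
proof -
  note tR = assms(9) and tS = assms(10) and tT = assms(11) and Adef = assms(12)
    and Bdef = assms(13) and Cdef = assms(14)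
  define Tp where "Tp = mpinv G J T"
  define Rp where "Rp = mpinv I H R"
  have Tm: "is_mpinv G J T Tp" unfolding Tp_def by (rule mpinv_is[OF tT])
  have Rm: "is_mpinv I H R Rp" unfolding Rp_def by (rule mpinv_is[OF tR])
  have tTp: "Tp \<in> tens J G" and tRp: "Rp \<in> tens H I"
    using Tm Rm by (auto simp: is_mpinv_def)
  have tA: "A \<in> tens I J" unfolding Adef by (intro ein_tens tR tS tT)
  have t1: "ein G (ein J T Tp) T = T" using Tm by (auto simp: is_mpinv_def)
  have r1: "ein I (ein H R Rp) R = R" using Rm by (auto simp: is_mpinv_def)
  have ATT: "ein G (ein J A Tp) T = A"
    unfolding Adef using t1 by (metis ein_assoc)
  have RRA: "ein H R (ein I Rp A) = A"
    unfolding Adef using r1 by (metis ein_assoc)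
  define X where "X = ein J A Tp"
  define A1 where "A1 = ein I Rp A"
  define X1 where "X1 = ein J A1 Tp"
  define Xp where "Xp = mpinv I G X"
  define A1p where "A1p = mpinv H J A1"
  define X1p where "X1p = mpinv H G X1"
  have tX: "X \<in> tens I G" unfolding X_def by (intro ein_tens tA tTp)
  have tA1: "A1 \<in> tens H J" unfolding A1_def by (intro ein_tens tA tRp)
  have tX1: "X1 \<in> tens H G" unfolding X1_def by (intro ein_tens tA1 tTp)
  have Xm: "is_mpinv I G X Xp" unfolding Xp_def by (rule mpinv_is[OF tX])
  have A1m: "is_mpinv H J A1 A1p" unfolding A1p_def by (rule mpinv_is[OF tA1])
  have X1m: "is_mpinv H G X1 X1p" unfolding X1p_def by (rule mpinv_is[OF tX1])
  have A1TT: "ein G (ein J A1 Tp) T = A1"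
    unfolding A1_def using ATT by (metis ein_assoc)
  have X1X: "X1 = ein I Rp X" unfolding X1_def A1_def X_def by (simp add: ein_assoc)
  have XX1: "X = ein H R X1" unfolding X1X X_def using RRA by (metis ein_assoc)
  have A1X1: "A1 = ein G X1 T" unfolding X1_def using A1TT by simp
  have RRX: "ein H R (ein I Rp X) = X" using XX1 X1X by simp
  have Bd: "B = ein G Tp Xp" using Bdef Tp_def Xp_def X_def by simp
  have Cd: "C = ein H A1p Rp" using Cdef Rp_def A1p_def A1_def by simp
  have Pd: "pmpinv I J H G R A T = ein H (ein G Tp X1p) Rp"
    unfolding pmpinv_def Tp_def[symmetric] Rp_def[symmetric] A1_def[symmetric] X1_def[symmetric]
      X1p_def[symmetric] by simp
  have PP: "ein I Xp X = ein H X1p X1" by (rule P_eq[OF Xm X1m XX1 X1X])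
  have QQ: "ein J A1 A1p = ein G X1 X1p" by (rule Q_eq[OF A1m X1m A1X1 X1_def])
  have cA1: "ein H A1p (ein I Rp R) = A1p" by (rule L1[OF A1m A1_def Rm])
  have cX1: "ein H X1p (ein I Rp R) = X1p"
    by (rule L1[OF X1m X1X Rm])
  have cX: "ein J T (ein G Tp Xp) = Xp" by (rule L2[OF Xm X_def Tm])
  have cX1': "ein J T (ein G Tp X1p) = X1p" by (rule L2[OF X1m X1_def Tm])
  have BX: "is_mpinv I J A B \<longleftrightarrow>
     ctrans (ein G Tp (ein G (ein I Xp X) T)) = ein G Tp (ein G (ein I Xp X) T)"
    using B_char[OF Tm ATT, of I Xp] Xm Bd X_def by simp
  have BX1: "is_mpinv H J A1 (ein G Tp X1p) \<longleftrightarrow>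
     ctrans (ein G Tp (ein G (ein H X1p X1) T)) = ein G Tp (ein G (ein H X1p X1) T)"
    using B_char[OF Tm A1TT, of H X1p] X1m X1_def by simp
  have CX: "is_mpinv I J A C \<longleftrightarrow>
     ctrans (ein H R (ein H (ein J A1 A1p) Rp)) = ein H R (ein H (ein J A1 A1p) Rp)"
    using C_char[OF Rm RRA, of J A1p] A1m Cd A1_def by simp
  have CX1: "is_mpinv I G X (ein H X1p Rp) \<longleftrightarrow>
     ctrans (ein H R (ein H (ein G X1 X1p) Rp)) = ein H R (ein H (ein G X1 X1p) Rp)"
    using C_char[OF Rm RRX, of G X1p] X1m X1X by simp
  have s1: "B = mpinv I J A \<longleftrightarrow> C = pmpinv I J H G R A T"
  proof -
    have "B = mpinv I J A \<longleftrightarrow> is_mpinv I J A B" by (rule mpinv_eq[OF tA])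
    also have "\<dots> \<longleftrightarrow> is_mpinv H J A1 (ein G Tp X1p)" using BX BX1 PP by simp
    also have "\<dots> \<longleftrightarrow> ein G Tp X1p = A1p" using mpinv_eq[OF tA1] A1p_def by metis
    also have "\<dots> \<longleftrightarrow> C = pmpinv I J H G R A T"
    proof
      assume "ein G Tp X1p = A1p" then show "C = pmpinv I J H G R A T" using Cd Pd by simp
    next
      assume "C = pmpinv I J H G R A T"
      then have "ein I (ein H A1p Rp) R = ein I (ein H (ein G Tp X1p) Rp) R" using Cd Pd by simp
      then show "ein G Tp X1p = A1p" using cA1 cX1 by (simp add: ein_assoc)
    qed
    finally show ?thesis .
  qed
  have s2: "B = pmpinv I J H G R A T \<longleftrightarrow> C = mpinv I J A"
  proof -
    have "B = pmpinv I J H G R A T \<longleftrightarrow> Xp = ein H X1p Rp"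
    proof
      assume "Xp = ein H X1p Rp" then show "B = pmpinv I J H G R A T" using Bd Pd by (simp add: ein_assoc)
    next
      assume "B = pmpinv I J H G R A T"
      then have "ein J T (ein G Tp Xp) = ein J T (ein G Tp (ein H X1p Rp))" using Bd Pd by (simp add: ein_assoc)
      then show "Xp = ein H X1p Rp" using cX cX1' by (metis ein_assoc)
    qed
    also have "\<dots> \<longleftrightarrow> is_mpinv I G X (ein H X1p Rp)" using mpinv_eq[OF tX] Xp_def by metis
    also have "\<dots> \<longleftrightarrow> is_mpinv I J A C" using CX CX1 QQ by simp
    also have "\<dots> \<longleftrightarrow> C = mpinv I J A" using mpinv_eq[OF tA] by metis
    finally show ?thesis .
  qed
  show ?thesis using s1 s2 by blast
qed

end
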